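(* Let $(X,\mu)$ and $(Y,\nu)$ be measure spaces with positive measures $\mu,\nu$, and let $\mathcal F\subseteq L^1(X,\mu)\times L^1(Y,\nu)$ be a family of pairs of real-valued functions. Assume there exist real numbers $p,q>1$ and $a,b,c>0$ such that for every $(f,g)\in\mathcal F$: (i) $\|g\|_{L^\infty(Y,\nu)}\le a\|f\|_{L^1(X,\mu)}$; (ii) $\|g\|_{L^q(Y,\nu)}\le b\|f\|_{L^p(X,\mu)}$; (iii) $\|f\|_{L^p(X,\mu)}\le c\|g\|_{L^q(Y,\nu)}$; (iv) $\int_X f\,d\mu\le 0$ and $\int_Y g\,d\nu\le 0$. Then for every $(f,g)\in\mathcal F$ with $(f,g)\neq(0,0)$, $$\mu(\{x\in X: f(x)<0\})^{1/p'}\,\nu(\{y\in Y: g(y)<0\})^{1/q}\ \ge\ a^{-1}b^{-q'/q}(2c)^{-q'},$$ where $p'=p/(p-1)$ and $q'=q/(q-1)$. *)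

theory Defs
  imports "HOL-Analysis.Analysis" "HOL-Probability.Essential_Supremum"
begin

text \<open>Real powers of extended nonnegative reals (with \<open>\<infinity> powr r = \<infinity>\<close>, used for r > 0).\<close>
definition enn_powr :: "ennreal \<Rightarrow> real \<Rightarrow> ennreal" where
  "enn_powr x r = (if x = \<infinity> then \<infinity> else ennreal (enn2real x powr r))"

definition Lp_norm :: "'a measure \<Rightarrow> real \<Rightarrow> ('a \<Rightarrow> real) \<Rightarrow> ennreal" where
  "Lp_norm M p f = enn_powr (\<integral>\<^sup>+ x. ennreal (\<bar>f x\<bar> powr p) \<partial>M) (1 / p)"

definition Linf_norm :: "'a measure \<Rightarrow> ('a \<Rightarrow> real) \<Rightarrow> ennreal" where
  "Linf_norm M f = esssup M (\<lambda>x. ennreal \<bar>f x\<bar>)"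

end

theory Submission
  imports Defs
begin

lemma enn_powr_real: "x \<ge> 0 \<Longrightarrow> enn_powr (ennreal x) r = ennreal (x powr r)"
  by (simp add: enn_powr_def)

lemma abs_split:
  fixes h :: "'a \<Rightarrow> real"
  assumes h: "integrable M h" and le: "(\<integral>x. h x \<partial>M) \<le> 0"
  shows "(\<integral>x. \<bar>h x\<bar> \<partial>M) \<le> 2 * (\<integral>x. indicator {x\<in>space M. h x < 0} x * \<bar>h x\<bar> \<partial>M)"
proof -
  have [measurable]: "h \<in> borel_measurable M" using h by auto
  have A: "{x\<in>space M. h x < 0} \<in> sets M" by measurable
  have i2: "integrable M (\<lambda>x. indicator {x\<in>space M. h x < 0} x * \<bar>h x\<bar>)"
    using integrable_mult_indicator[OF A integrable_abs[OF h]] by simp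
  have "(\<integral>x. \<bar>h x\<bar> \<partial>M) = (\<integral>x. 2 * (indicator {x\<in>space M. h x < 0} x * \<bar>h x\<bar>) + h x \<partial>M)"
    by (rule Bochner_Integration.integral_cong) (auto simp: indicator_def)
  also have "\<dots> = 2 * (\<integral>x. indicator {x\<in>space M. h x < 0} x * \<bar>h x\<bar> \<partial>M) + (\<integral>x. h x \<partial>M)"
    using i2 h by simp
  finally show ?thesis using le by linarith
qed

lemma neg_pos:
  fixes h :: "'a \<Rightarrow> real"
  assumes h: "integrable M h" and le: "(\<integral>x. h x \<partial>M) \<le> 0" and nz: "\<not> (AE x in M. h x = 0)"
  shows "emeasure M {x\<in>space M. h x < 0} > 0"
proof (rule ccontr)
  have [measurable]: "h \<in> borel_measurable M" using h by auto
  assume "\<not> ?thesis"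
  then have "emeasure M {x\<in>space M. h x < 0} = 0" by simp
  then have ae: "AE x in M. 0 \<le> h x"
    by (subst AE_iff_measurable[OF _ refl]) (auto simp: not_le)
  then have "(\<integral>x. h x \<partial>M) \<ge> 0" by (simp add: integral_nonneg_AE)
  with le have "(\<integral>x. h x \<partial>M) = 0" by simp
  with integral_nonneg_eq_0_iff_AE[OF h ae] nz show False by simp
qed

lemma young_ind:
  fixes f :: "'a \<Rightarrow> real"
  assumes f: "integrable M f" and fp: "integrable M (\<lambda>x. \<bar>f x\<bar> powr p)" and p: "p>1"
    and A: "A \<in> sets M" "emeasure M A < \<infinity>" and mpos: "measure M A > 0"
    and Ppos: "(\<integral>x. \<bar>f x\<bar> powr p \<partial>M) > 0"
  shows "(\<integral>x. indicator A x * \<bar>f x\<bar> \<partial>M) \<le> measure M A powr (1/(p/(p-1))) * (\<integral>x. \<bar>f x\<bar> powr p \<partial>M) powr (1/p)"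
proof -
  define P where "P = (\<integral>x. \<bar>f x\<bar> powr p \<partial>M)"
  define m where "m = measure M A"
  define pp where "pp = p/(p-1)"
  define K1 where "K1 = P powr (1/p)"
  define K2 where "K2 = m powr (1/pp)"
  have pp: "pp > 1" "1/p + 1/pp = 1" using p by (auto simp: pp_def field_simps)
  have P0: "P > 0" and m0: "m > 0" using Ppos mpos by (auto simp: P_def m_def)
  have K: "K1 > 0" "K2 > 0" using P0 m0 by (auto simp: K1_def K2_def)
  have K1p: "K1 powr p = P" using P0 p by (simp add: K1_def powr_powr)
  have K2p: "K2 powr pp = m" using m0 pp by (simp add: K2_def powr_powr)
  have pw: "indicator A x * \<bar>f x\<bar> / (K1 * K2) \<le> \<bar>f x\<bar> powr p / (P * p) + indicator A x / (m * pp)" for x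
  proof -
    have "(\<bar>f x\<bar>/K1) * (indicator A x / K2) \<le> (\<bar>f x\<bar>/K1) powr p / p + (indicator A x / K2) powr pp / pp"
      using K by (intro Youngs_inequality) (use p pp in auto)
    moreover have "(\<bar>f x\<bar>/K1) powr p = \<bar>f x\<bar> powr p / P"
      using K by (simp add: powr_divide K1p)
    moreover have "(indicator A x / K2) powr pp = indicator A x / m"
      using K K2p by (auto simp: indicator_def powr_divide)
    ultimately show ?thesis by (simp add: field_simps)
  qed
  have iA: "integrable M (indicator A :: 'a \<Rightarrow> real)" using A by auto
  have i1: "integrable M (\<lambda>x. indicator A x * \<bar>f x\<bar>)"
    using integrable_mult_indicator[OF A(1) integrable_abs[OF f]] by simp
  have "(\<integral>x. indicator A x * \<bar>f x\<bar> / (K1 * K2) \<partial>M) \<le> (\<integral>x. \<bar>f x\<bar> powr p / (P * p) + indicator A x / (m * pp) \<partial>M)"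
    using i1 fp iA pw by (intro integral_mono) auto
  also have "\<dots> = P / (P * p) + m / (m * pp)"
    using fp iA A by (simp add: P_def m_def)
  also have "\<dots> = 1" using P0 m0 pp p by (simp add: field_simps)
  finally have "(\<integral>x. indicator A x * \<bar>f x\<bar> \<partial>M) / (K1 * K2) \<le> 1" by simp
  then show ?thesis using K by (simp add: field_simps K1_def K2_def P_def m_def pp_def)
qed

lemma powr_m1: "(x::real) > 0 \<Longrightarrow> x powr (q-1) * x = x powr q"
  using powr_add[of x "q-1" 1] by simp

lemma pw_bound:
  fixes y G q :: real
  assumes "\<bar>y\<bar> \<le> G" "q > 1"
  shows "\<bar>y\<bar> powr q \<le> G powr (q-1) * \<bar>y\<bar>"
proof (cases "y = 0")
  case False
  have "\<bar>y\<bar> powr q = \<bar>y\<bar> powr (q-1) * \<bar>y\<bar>" using False powr_m1[of "\<bar>y\<bar>" q] by simp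
  also have "\<dots> \<le> G powr (q-1) * \<bar>y\<bar>" using assms False
    by (intro mult_right_mono powr_mono2) auto
  finally show ?thesis .
qed simp

lemma g_bound:
  fixes g :: "'a \<Rightarrow> real"
  assumes g: "integrable N g" and le: "(\<integral>x. g x \<partial>N) \<le> 0" and q: "q > 1" and G: "G \<ge> 0"
    and bnd: "AE x in N. \<bar>g x\<bar> \<le> G" and fin: "emeasure N {x\<in>space N. g x < 0} < \<infinity>"
  shows "integrable N (\<lambda>x. \<bar>g x\<bar> powr q)"
    and "(\<integral>x. \<bar>g x\<bar> powr q \<partial>N) \<le> 2 * G powr q * measure N {x\<in>space N. g x < 0}"
proof -
  have [measurable]: "g \<in> borel_measurable N" using g by auto
  define B where "B = {x\<in>space N. g x < 0}"
  have B: "B \<in> sets N" unfolding B_def by measurable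
  have i1: "integrable N (\<lambda>x. G powr (q-1) * \<bar>g x\<bar>)" using g by auto
  have ae: "AE x in N. \<bar>g x\<bar> powr q \<le> G powr (q-1) * \<bar>g x\<bar>"
    using bnd by eventually_elim (use q pw_bound in auto)
  show ig: "integrable N (\<lambda>x. \<bar>g x\<bar> powr q)"
    by (rule Bochner_Integration.integrable_bound[OF i1]) (use ae in \<open>auto elim!: eventually_mono\<close>)
  have iB: "integrable N (\<lambda>x. indicator B x * \<bar>g x\<bar>)"
    using integrable_mult_indicator[OF B integrable_abs[OF g]] by simp
  have iBG: "integrable N (\<lambda>x. indicator B x * G)" using B fin by (auto simp: B_def)
  have "(\<integral>x. \<bar>g x\<bar> powr q \<partial>N) \<le> (\<integral>x. G powr (q-1) * \<bar>g x\<bar> \<partial>N)"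
    by (rule integral_mono_AE[OF ig i1 ae])
  also have "\<dots> = G powr (q-1) * (\<integral>x. \<bar>g x\<bar> \<partial>N)" by simp
  also have "\<dots> \<le> G powr (q-1) * (2 * (\<integral>x. indicator B x * \<bar>g x\<bar> \<partial>N))"
    using abs_split[OF g le] by (intro mult_left_mono) (auto simp: B_def)
  also have "(\<integral>x. indicator B x * \<bar>g x\<bar> \<partial>N) \<le> (\<integral>x. indicator B x * G \<partial>N)"
    using bnd by (intro integral_mono_AE[OF iB iBG]) (auto simp: indicator_def elim!: eventually_mono)
  also have "(\<integral>x. indicator B x * G \<partial>N) = measure N B * G" using B fin by (simp add: B_def)
  also have "G powr (q-1) * (2 * (measure N B * G)) = 2 * (G powr (q-1) * G) * measure N B" by simp
  also have "G powr (q-1) * G = G powr q"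
  proof (cases "G = 0")
    case False then show ?thesis using G powr_m1[of G q] by simp
  qed simp
  finally show "(\<integral>x. \<bar>g x\<bar> powr q \<partial>N) \<le> 2 * G powr q * measure N {x\<in>space N. g x < 0}"
    by (simp add: B_def mult_left_mono)
qed

lemma final_real:
  fixes a b c G q \<alpha> \<beta> F1 Fp Gq :: real
  assumes pos: "a > 0" "b > 0" "c > 0" "G > 0" "q > 1" "\<alpha> \<ge> 0" "\<beta> \<ge> 0" "Gq > 0"
    and h1: "G \<le> a * F1" and h2: "F1 \<le> 2 * (\<alpha> * Fp)" and h3: "Fp \<le> c * Gq"
    and h4: "Gq \<le> b * Fp" and h5: "Gq \<le> 2 powr (1/q) * G * \<beta>"
  shows "inverse a * b powr (- (q / (q - 1)) / q) * (2 * c) powr (- (q / (q - 1))) \<le> \<alpha> * \<beta>"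
proof -
  define s where "s = 2 powr (1/q)"
  define r where "r = q / (q - 1)"
  have s0: "s > 0" by (simp add: s_def)
  have "G \<le> a * (2 * (\<alpha> * Fp))" using h1 h2 pos by (meson mult_left_mono less_imp_le order_trans)
  also have "\<dots> \<le> a * (2 * (\<alpha> * (c * Gq)))" using h3 pos by (intro mult_left_mono) auto
  also have "\<dots> \<le> a * (2 * (\<alpha> * (c * (s * G * \<beta>))))" using h5 pos by (intro mult_left_mono) (auto simp: s_def)
  finally have "G * 1 \<le> G * (2 * s * a * c * \<alpha> * \<beta>)" by (simp add: algebra_simps)
  then have key: "1 \<le> 2 * s * a * c * (\<alpha> * \<beta>)" using pos by (simp add: mult_le_cancel_left_pos algebra_simps)
  have "Gq \<le> b * (c * Gq)" using h4 h3 pos by (meson mult_left_mono less_imp_le order_trans)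
  then have bc: "1 \<le> b * c" using pos by (simp add: algebra_simps)
  then have cb: "1 / c \<le> b" using pos by (simp add: field_simps)
  have r1: "r > 1" "r \<ge> 1 + 1/q" using pos by (auto simp: r_def field_simps)
  have "b powr (- r / q) \<le> (1/c) powr (- r / q)"
    using r1 pos cb by (intro powr_mono2') auto
  also have "\<dots> = c powr (r/q)" using pos by (simp add: powr_divide powr_minus_divide)
  finally have e1: "b powr (- r / q) \<le> c powr (r/q)" .
  have e2: "(2 * c) powr (- r) = 2 powr (- r) * c powr (- r)" by (simp add: powr_mult)
  have e3: "c powr (r/q) * c powr (- r) = 1 / c"
  proof -
    have "r/q + - r = -1" using pos by (simp add: r_def field_simps)
    then have "c powr (r/q) * c powr (- r) = c powr (-1)" by (simp flip: powr_add)
    then show ?thesis using pos by (simp add: powr_minus_divide)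
  qed
  have e4: "2 powr (- r) \<le> 2 powr (- (1 + 1/q))" using r1 by (intro powr_mono) auto
  also have "\<dots> = 1 / (2 powr (1 + 1/q))" by (rule powr_minus_divide)
  also have "\<dots> = 1 / (2 * s)" by (simp add: s_def powr_add)
  finally have e4: "2 powr (- r) \<le> 1 / (2 * s)" .
  have "inverse a * b powr (- r / q) * (2 * c) powr (- r) \<le> inverse a * c powr (r/q) * (2 powr (- r) * c powr (- r))"
    using e1 pos e2 by (intro mult_mono mult_left_mono) auto
  also have "\<dots> = inverse a * (c powr (r/q) * c powr (- r)) * 2 powr (- r)" by (simp only: mult_ac)
  also have "\<dots> = inverse a * (1/c) * 2 powr (- r)" by (simp only: e3)
  also have "\<dots> \<le> inverse a * (1/c) * (1 / (2 * s))" using e4 pos by (intro mult_left_mono) auto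
  also have "\<dots> \<le> \<alpha> * \<beta>" using key pos s0 by (simp add: field_simps)
  finally show ?thesis by (simp add: r_def)
qed

lemma enn_am: "0 \<le> a \<Longrightarrow> 0 \<le> x \<Longrightarrow> ennreal a * ennreal x = ennreal (a * x)"
  by (simp add: ennreal_mult)
lemma enn_le_mult: "0 \<le> a \<Longrightarrow> 0 \<le> x \<Longrightarrow> ennreal y \<le> ennreal a * ennreal x \<Longrightarrow> y \<le> a*x"
  using enn_am[of a x] by (metis ennreal_le_iff mult_nonneg_nonneg)

lemma enn_powr_eq0: "r > 0 \<Longrightarrow> enn_powr X r = 0 \<Longrightarrow> X = 0"
  by (cases X) (auto simp: enn_powr_def)

lemma enn_powr_pos: "r > 0 \<Longrightarrow> X > 0 \<Longrightarrow> enn_powr X r > 0"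
  by (cases X) (auto simp: enn_powr_def)

lemma enn_powr_top: "enn_powr top r = top"
  by (simp add: enn_powr_def)

lemma Lp_norm_zero_AE:
  fixes f :: "'a \<Rightarrow> real"
  assumes [measurable]: "f \<in> borel_measurable M" and p: "p > 0" and z: "Lp_norm M p f = 0"
  shows "AE x in M. f x = 0"
proof -
  have "(\<integral>\<^sup>+ x. ennreal (\<bar>f x\<bar> powr p) \<partial>M) = 0"
    using enn_powr_eq0[of "1/p"] z p by (auto simp: Lp_norm_def)
  then have "AE x in M. ennreal (\<bar>f x\<bar> powr p) = 0" by (simp add: nn_integral_0_iff_AE)
  then show ?thesis by eventually_elim simp
qed

lemma Lp_norm_real:
  fixes f :: "'a \<Rightarrow> real"
  assumes "integrable M (\<lambda>x. \<bar>f x\<bar> powr p)"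
  shows "Lp_norm M p f = ennreal ((\<integral>x. \<bar>f x\<bar> powr p \<partial>M) powr (1/p))"
  unfolding Lp_norm_def using assms
  by (subst nn_integral_eq_integral) (auto intro!: enn_powr_real integral_nonneg_AE)

lemma core:
  fixes M :: "'a measure" and N :: "'b measure" and f :: "'a \<Rightarrow> real" and g :: "'b \<Rightarrow> real"
    and p q a b c :: real
  assumes fi: "integrable M f" and gi: "integrable N g"
    and p: "p > 1" and q: "q > 1"
    and a: "a > 0" and b: "b > 0" and c: "c > 0"
    and i: "Linf_norm N g \<le> ennreal a * Lp_norm M 1 f"
    and ii: "Lp_norm N q g \<le> ennreal b * Lp_norm M p f"
    and iii: "Lp_norm M p f \<le> ennreal c * Lp_norm N q g"
    and intf: "(\<integral>x. f x \<partial>M) \<le> 0" and intg: "(\<integral>y. g y \<partial>N) \<le> 0"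
    and nz: "\<not> ((AE x in M. f x = 0) \<and> (AE y in N. g y = 0))"
  shows "enn_powr (emeasure M {x \<in> space M. f x < 0}) (1 / (p / (p - 1)))
             * enn_powr (emeasure N {y \<in> space N. g y < 0}) (1 / q)
           \<ge> ennreal (inverse a * b powr (- (q / (q - 1)) / q) * (2 * c) powr (- (q / (q - 1))))"
proof -
  have [measurable]: "f \<in> borel_measurable M" "g \<in> borel_measurable N" using fi gi by auto
  define A where "A = {x \<in> space M. f x < 0}"
  define B where "B = {y \<in> space N. g y < 0}"
  have A[measurable]: "A \<in> sets M" unfolding A_def by measurable
  have B[measurable]: "B \<in> sets N" unfolding B_def by measurable
  define F1 where "F1 = (\<integral>x. \<bar>f x\<bar> \<partial>M)"
  have F1: "Lp_norm M 1 f = ennreal F1"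
    using Lp_norm_real[of M f 1] fi by (simp add: F1_def)
  define L where "L = Linf_norm N g"
  have Lae: "AE y in N. ennreal \<bar>g y\<bar> \<le> L" unfolding L_def Linf_norm_def by (rule esssup_AE)
  have F10: "F1 \<ge> 0" by (simp add: F1_def)
  have "L \<le> ennreal (a*F1)" using i F1 enn_am[of a F1] a F10 by (simp add: L_def)
  then have Lfin: "L < \<infinity>" using ennreal_less_top[of "a*F1"] order.strict_trans1 infinity_ennreal_def by metis
  define G where "G = enn2real L"
  have LG: "L = ennreal G" using Lfin by (simp add: G_def)
  have G0: "G \<ge> 0" by (simp add: G_def)
  have gnz: "\<not> (AE y in N. g y = 0)"
  proof
    assume ae: "AE y in N. g y = 0"
    have "Lp_norm N q g = 0"
      unfolding Lp_norm_def using q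
      by (subst nn_integral_cong_AE[where v="\<lambda>_. 0"]) (use ae in \<open>auto elim!: eventually_mono simp: enn_powr_def\<close>)
    then have "Lp_norm M p f = 0" using iii by simp
    then have "AE x in M. f x = 0" using p by (intro Lp_norm_zero_AE) auto
    with ae nz show False by simp
  qed
  have Lnz: "L \<noteq> 0"
  proof
    assume L0: "L = 0"
    have "AE y in N. g y = 0" using Lae unfolding L0 by eventually_elim simp
    with gnz show False by simp
  qed
  have fnz: "\<not> (AE x in M. f x = 0)"
  proof
    assume ae: "AE x in M. f x = 0"
    then have "F1 = 0" unfolding F1_def by (subst integral_eq_zero_AE) (auto elim!: eventually_mono)
    then have "L = 0" using i F1 by (simp add: L_def)
    with Lnz show False by simp
  qed
  have Gpos: "G > 0" using Lnz LG G0 by (cases "G = 0") auto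
  have mA: "emeasure M A > 0" unfolding A_def by (rule neg_pos[OF fi intf fnz])
  have nB: "emeasure N B > 0" unfolding B_def by (rule neg_pos[OF gi intg gnz])
  have p1: "1 / (p / (p - 1)) > 0" using p by simp
  have q1: "1 / q > 0" using q by simp
  show ?thesis
  proof (cases "emeasure M A = \<infinity> \<or> emeasure N B = \<infinity>")
    case True
    have "enn_powr (emeasure M A) (1 / (p / (p - 1))) * enn_powr (emeasure N B) (1 / q) = \<infinity>"
      using True enn_powr_pos[OF p1 mA] enn_powr_pos[OF q1 nB]
      by (auto simp: enn_powr_top ennreal_mult_eq_top_iff)
    then show ?thesis by (simp add: A_def B_def)
  next
    case False
    define m where "m = measure M A"
    define n where "n = measure N B"
    have mm: "emeasure M A = ennreal m" using False by (simp add: m_def emeasure_eq_ennreal_measure)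
    have nn: "emeasure N B = ennreal n" using False by (simp add: n_def emeasure_eq_ennreal_measure)
    have m0: "m > 0" using mA mm by (simp add: m_def)
    have n0: "n > 0" using nB nn by (simp add: n_def)
    have bnd: "AE y in N. \<bar>g y\<bar> \<le> G" using Lae unfolding LG by eventually_elim (use G0 in simp)
    have gfin: "emeasure N {y \<in> space N. g y < 0} < \<infinity>" using False by (simp add: B_def less_top)
    note gb = g_bound[OF gi intg q G0 bnd gfin]
    define Q where "Q = (\<integral>x. \<bar>g x\<bar> powr q \<partial>N)"
    have Lq: "Lp_norm N q g = ennreal (Q powr (1/q))" using Lp_norm_real[OF gb(1)] by (simp add: Q_def)
    have Q0: "Q \<ge> 0" unfolding Q_def by (rule integral_nonneg_AE) auto
    have Qpos: "Q > 0"
    proof (rule ccontr)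
      assume "\<not> Q > 0"
      then have "Q = 0" using Q0 by simp
      then have "AE x in N. \<bar>g x\<bar> powr q = 0"
        using integral_nonneg_eq_0_iff_AE[OF gb(1)] by (simp add: Q_def)
      then have "AE x in N. g x = 0" by eventually_elim simp
      with gnz show False by simp
    qed
    define X where "X = (\<integral>\<^sup>+ x. ennreal (\<bar>f x\<bar> powr p) \<partial>M)"
    have "X \<noteq> \<infinity>"
    proof
      assume "X = \<infinity>"
      then have "Lp_norm M p f = \<infinity>" by (simp add: Lp_norm_def X_def enn_powr_top)
      moreover have "ennreal c * Lp_norm N q g = ennreal (c * Q powr (1/q))"
        using Lq enn_am[of c "Q powr (1/q)"] c by simp
      ultimately show False using iii by (simp add: top_unique)
    qed
    have fpi: "integrable M (\<lambda>x. \<bar>f x\<bar> powr p)"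
      using \<open>X \<noteq> \<infinity>\<close> by (intro integrableI_nonneg) (auto simp: X_def less_top)
    define P where "P = (\<integral>x. \<bar>f x\<bar> powr p \<partial>M)"
    have Lp: "Lp_norm M p f = ennreal (P powr (1/p))" using Lp_norm_real[OF fpi] by (simp add: P_def)
    have P0: "P \<ge> 0" unfolding P_def by (rule integral_nonneg_AE) auto
    have Ppos: "P > 0"
    proof (rule ccontr)
      assume "\<not> P > 0"
      then have "P = 0" using P0 by simp
      then have "AE x in M. \<bar>f x\<bar> powr p = 0"
        using integral_nonneg_eq_0_iff_AE[OF fpi] by (simp add: P_def)
      then have "AE x in M. f x = 0" by eventually_elim simp
      with fnz show False by simp
    qed
    define \<alpha> where "\<alpha> = m powr (1 / (p / (p - 1)))"
    define \<beta> where "\<beta> = n powr (1 / q)"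
    have "ennreal G \<le> ennreal a * ennreal F1" using i F1 LG by (simp add: L_def)
    then have h1: "G \<le> a * F1" using a F10 by (intro enn_le_mult) auto
    have h2: "F1 \<le> 2 * (\<alpha> * P powr (1/p))"
    proof -
      have "F1 \<le> 2 * (\<integral>x. indicator A x * \<bar>f x\<bar> \<partial>M)"
        using abs_split[OF fi intf] by (simp add: F1_def A_def)
      also have "(\<integral>x. indicator A x * \<bar>f x\<bar> \<partial>M) \<le> \<alpha> * P powr (1/p)"
        unfolding \<alpha>_def P_def m_def
        by (rule young_ind[OF fi fpi p A]) (use False m0 Ppos in \<open>auto simp: m_def P_def less_top\<close>)
      finally show ?thesis by simp
    qed
    have h3: "P powr (1/p) \<le> c * Q powr (1/q)" using iii Lp Lq c by (intro enn_le_mult) auto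
    have h4: "Q powr (1/q) \<le> b * P powr (1/p)" using ii Lp Lq b by (intro enn_le_mult) auto
    have h5: "Q powr (1/q) \<le> 2 powr (1/q) * G * \<beta>"
    proof -
      have "Q \<le> 2 * G powr q * n" using gb(2) by (simp add: Q_def n_def B_def)
      then have "Q powr (1/q) \<le> (2 * G powr q * n) powr (1/q)" using Q0 q by (intro powr_mono2) auto
      also have "\<dots> = 2 powr (1/q) * G * \<beta>"
        using G0 q by (simp add: powr_mult powr_powr \<beta>_def)
      finally show ?thesis .
    qed
    have ineq: "inverse a * b powr (- (q / (q - 1)) / q) * (2 * c) powr (- (q / (q - 1))) \<le> \<alpha> * \<beta>"
      by (rule final_real[OF a b c Gpos q _ _ _ h1 h2 h3 h4 h5]) (use Qpos in \<open>auto simp: \<alpha>_def \<beta>_def\<close>)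
    have E: "enn_powr (emeasure M A) (1 / (p / (p - 1))) * enn_powr (emeasure N B) (1 / q) = ennreal (\<alpha> * \<beta>)"
      using mm nn m0 n0 enn_am[of \<alpha> \<beta>] by (simp add: enn_powr_real \<alpha>_def \<beta>_def)
    show ?thesis unfolding A_def[symmetric] B_def[symmetric] E by (rule ennreal_leI) (rule ineq)
  qed
qed

theorem mainTheorem1:
  fixes M :: "'a measure" and N :: "'b measure"
    and F :: "(('a \<Rightarrow> real) \<times> ('b \<Rightarrow> real)) set"
    and p q a b c :: real
  assumes F_L1: "\<forall>(f, g) \<in> F. integrable M f \<and> integrable N g"
    and p: "p > 1" and q: "q > 1"
    and a: "a > 0" and b: "b > 0" and c: "c > 0"
    and i: "\<forall>(f, g) \<in> F. Linf_norm N g \<le> ennreal a * Lp_norm M 1 f"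
    and ii: "\<forall>(f, g) \<in> F. Lp_norm N q g \<le> ennreal b * Lp_norm M p f"
    and iii: "\<forall>(f, g) \<in> F. Lp_norm M p f \<le> ennreal c * Lp_norm N q g"
    and iv: "\<forall>(f, g) \<in> F. (\<integral>x. f x \<partial>M) \<le> 0 \<and> (\<integral>y. g y \<partial>N) \<le> 0"
  shows "\<forall>(f, g) \<in> F. \<not> ((AE x in M. f x = 0) \<and> (AE y in N. g y = 0)) \<longrightarrow>
           enn_powr (emeasure M {x \<in> space M. f x < 0}) (1 / (p / (p - 1)))
             * enn_powr (emeasure N {y \<in> space N. g y < 0}) (1 / q)
           \<ge> ennreal (inverse a * b powr (- (q / (q - 1)) / q) * (2 * c) powr (- (q / (q - 1))))"
proof (intro ballI impI, clarify)
  fix f g assume fg: "(f, g) \<in> F" and nz: "\<not> ((AE x in M. f x = 0) \<and> (AE y in N. g y = 0))"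
  show "enn_powr (emeasure M {x \<in> space M. f x < 0}) (1 / (p / (p - 1)))
             * enn_powr (emeasure N {y \<in> space N. g y < 0}) (1 / q)
           \<ge> ennreal (inverse a * b powr (- (q / (q - 1)) / q) * (2 * c) powr (- (q / (q - 1))))"
    using F_L1 i ii iii iv fg by (intro core[OF _ _ p q a b c _ _ _ _ _ nz]) auto
qed

end
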